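(* Let $D$ be an AV-domain with quotient field $K$ and let $L$ be a subfield of $K$. Then $D\cap L$ is an AV-domain. Moreover, if $M$ denotes the quotient field of $D\cap L$, then $\overline{D}\cap M$ is a valuation domain with quotient field $M$, and the integral closures of $D\cap L$ and of $D\cap M$ (in $M$) both equal $\overline{D}\cap M$.
   Context: An integral domain $D$ is an AV-domain if for all nonzero $a,b\in D$ there is a natural number $n$ with $a^n\mid b^n$ or $b^n\mid a^n$ in $D$. $\overline{D}$ denotes the integral closure of $D$ in $K$. *)

theory Defs
  imports "HOL-Computational_Algebra.Polynomial"
begin

text \<open>All rings considered are subrings of an ambient field of type 'k.\<close>

definition subring :: "'k::field set \<Rightarrow> bool" where
  "subring S \<longleftrightarrow> 0 \<in> S \<and> 1 \<in> S \<and>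
     (\<forall>x\<in>S. \<forall>y\<in>S. x + y \<in> S \<and> x - y \<in> S \<and> x * y \<in> S)"

definition subfield :: "'k::field set \<Rightarrow> bool" where
  "subfield S \<longleftrightarrow> subring S \<and> (\<forall>x\<in>S. x \<noteq> 0 \<longrightarrow> inverse x \<in> S)"

definition quot_field :: "'k::field set \<Rightarrow> 'k set" where
  "quot_field S = {a / b | a b. a \<in> S \<and> b \<in> S \<and> b \<noteq> 0}"

definition dvd_in :: "'k::field set \<Rightarrow> 'k \<Rightarrow> 'k \<Rightarrow> bool" where
  "dvd_in S a b \<longleftrightarrow> (\<exists>c\<in>S. b = a * c)"

definition AV_domain :: "'k::field set \<Rightarrow> bool" where
  "AV_domain D \<longleftrightarrow> subring D \<and>
     (\<forall>a\<in>D. \<forall>b\<in>D. a \<noteq> 0 \<longrightarrow> b \<noteq> 0 \<longrightarrow>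
        (\<exists>n::nat. n \<ge> 1 \<and> (dvd_in D (a ^ n) (b ^ n) \<or> dvd_in D (b ^ n) (a ^ n))))"

definition valuation_domain_with_qf :: "'k::field set \<Rightarrow> 'k set \<Rightarrow> bool" where
  "valuation_domain_with_qf V M \<longleftrightarrow> subring V \<and> quot_field V = M \<and>
     (\<forall>x\<in>M. x \<noteq> 0 \<longrightarrow> x \<in> V \<or> inverse x \<in> V)"

definition integral_over :: "'k::field set \<Rightarrow> 'k \<Rightarrow> bool" where
  "integral_over S x \<longleftrightarrow>
     (\<exists>p :: 'k poly. lead_coeff p = 1 \<and> (\<forall>i. coeff p i \<in> S) \<and> poly p x = 0)"

definition integral_closure :: "'k::field set \<Rightarrow> 'k set \<Rightarrow> 'k set" where
  "integral_closure S M = {x \<in> M. integral_over S x}"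

end

theory Submission
  imports Defs "Jordan_Normal_Form.Char_Poly"
begin

lemma subringD:
  assumes "subring S"
  shows "0 \<in> S" "1 \<in> S" "x \<in> S \<Longrightarrow> y \<in> S \<Longrightarrow> x + y \<in> S"
    "x \<in> S \<Longrightarrow> y \<in> S \<Longrightarrow> x - y \<in> S" "x \<in> S \<Longrightarrow> y \<in> S \<Longrightarrow> x * y \<in> S"
  using assms unfolding subring_def by auto

lemma subring_uminus: "subring S \<Longrightarrow> x \<in> S \<Longrightarrow> - x \<in> S"
  by (metis diff_0 subringD(1) subringD(4))

lemma subring_sum: "subring S \<Longrightarrow> (\<And>a. a \<in> A \<Longrightarrow> f a \<in> S) \<Longrightarrow> sum f A \<in> S"
  by (induction A rule: infinite_finite_induct) (auto intro: subringD)

lemma subring_prod: "subring S \<Longrightarrow> (\<And>a. a \<in> A \<Longrightarrow> f a \<in> S) \<Longrightarrow> prod f A \<in> S"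
  by (induction A rule: infinite_finite_induct) (auto intro: subringD)

lemma subring_pow: "subring S \<Longrightarrow> x \<in> S \<Longrightarrow> x ^ n \<in> S"
  by (induction n) (auto intro: subringD)

lemma subring_Int: "subring A \<Longrightarrow> subring B \<Longrightarrow> subring (A \<inter> B)"
  unfolding subring_def by auto

definition PS :: "'k::field set \<Rightarrow> 'k poly set" where
  "PS S = {p. \<forall>i. coeff p i \<in> S}"

lemma PS_add: "subring S \<Longrightarrow> p \<in> PS S \<Longrightarrow> q \<in> PS S \<Longrightarrow> p + q \<in> PS S"
  unfolding PS_def by (auto intro: subringD)

lemma PS_uminus: "subring S \<Longrightarrow> p \<in> PS S \<Longrightarrow> - p \<in> PS S"
  unfolding PS_def by (auto intro: subring_uminus)

lemma PS_mult: "subring S \<Longrightarrow> p \<in> PS S \<Longrightarrow> q \<in> PS S \<Longrightarrow> p * q \<in> PS S"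
  unfolding PS_def by (auto simp: coeff_mult intro!: subring_sum subringD)

lemma PS_const: "subring S \<Longrightarrow> c \<in> S \<Longrightarrow> [:c:] \<in> PS S"
  unfolding PS_def by (auto simp: coeff_pCons split: nat.splits intro: subringD)

lemma PS_X: "subring S \<Longrightarrow> [:0,1:] \<in> PS S"
  unfolding PS_def by (auto simp: coeff_pCons split: nat.splits intro: subringD)

lemma PS_pCons: "subring S \<Longrightarrow> c \<in> S \<Longrightarrow> p \<in> PS S \<Longrightarrow> pCons c p \<in> PS S"
  unfolding PS_def by (auto simp: coeff_pCons split: nat.splits)

lemma PS_0: "subring S \<Longrightarrow> 0 \<in> PS S"
  unfolding PS_def by (auto intro: subringD)

lemma PS_1: "subring S \<Longrightarrow> 1 \<in> PS S"
  using PS_const[of S 1] by (auto intro: subringD simp: one_pCons)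

lemma PS_sum: "subring S \<Longrightarrow> (\<And>a. a \<in> A \<Longrightarrow> f a \<in> PS S) \<Longrightarrow> sum f A \<in> PS S"
  by (induction A rule: infinite_finite_induct) (auto intro: PS_add PS_0)

lemma PS_prod: "subring S \<Longrightarrow> (\<And>a. a \<in> A \<Longrightarrow> f a \<in> PS S) \<Longrightarrow> prod f A \<in> PS S"
  by (induction A rule: infinite_finite_induct) (auto intro: PS_mult PS_1)

lemma PS_signof: "subring S \<Longrightarrow> signof p \<in> PS S"
  by (cases p rule: sign_cases) (auto intro: PS_1 PS_uminus)

lemma char_poly_PS:
  assumes S: "subring S" and A: "A \<in> carrier_mat n n" and AS: "\<And>i j. i < n \<Longrightarrow> j < n \<Longrightarrow> A $$ (i,j) \<in> S"
  shows "char_poly A \<in> PS S"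
proof -
  have cA: "char_poly_matrix A \<in> carrier_mat n n" using A by simp
  have ent: "char_poly_matrix A $$ (i,j) \<in> PS S" if "i < n" "j < n" for i j
    using that A AS[OF that]
    by (auto simp: char_poly_matrix_def intro!: PS_add PS_mult PS_X PS_const PS_0 PS_1 S subring_uminus PS_pCons)
  show ?thesis unfolding char_poly_def det_def'[OF cA]
    by (intro PS_sum PS_mult PS_signof PS_prod S ent) (auto dest: permutes_in_image)
qed

lemma det_trick:
  fixes S :: "'k::field set" and n k :: nat and g :: "nat \<Rightarrow> 'k"
  assumes S: "subring S" and k: "k < n" and gk: "g k \<noteq> 0"
    and rel: "\<forall>i<n. \<exists>a. (\<forall>j<n. a j \<in> S) \<and> s * g i = (\<Sum>j\<in>{0..<n}. a j * g j)"
  shows "integral_over S s"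
proof -
  from rel obtain a where a: "\<And>i. i < n \<Longrightarrow> (\<forall>j<n. a i j \<in> S) \<and> s * g i = (\<Sum>j\<in>{0..<n}. a i j * g j)"
    by metis
  define A where "A = mat n n (\<lambda>(i,j). a i j)"
  define v where "v = vec n g"
  have A: "A \<in> carrier_mat n n" unfolding A_def by simp
  have "eigenvector A v s"
    unfolding eigenvector_def
  proof (intro conjI)
    show "v \<in> carrier_vec (dim_row A)" using A unfolding v_def by simp
    show "v \<noteq> 0\<^sub>v (dim_row A)"
    proof
      assume "v = 0\<^sub>v (dim_row A)"
      then have "v $ k = 0" using A k by simp
      then show False using gk k unfolding v_def by simp
    qed
    show "A *\<^sub>v v = s \<cdot>\<^sub>v v"
      by (rule eq_vecI) (use A a in \<open>auto simp: v_def A_def scalar_prod_def\<close>)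
  qed
  then have "eigenvalue A s" unfolding eigenvalue_def by blast
  then have root: "poly (char_poly A) s = 0" using eigenvalue_root_char_poly[OF A] by simp
  have "char_poly A \<in> PS S"
    by (rule char_poly_PS[OF S A]) (use a in \<open>auto simp: A_def\<close>)
  moreover have "lead_coeff (char_poly A) = 1" using degree_monic_char_poly[OF A] by simp
  ultimately show ?thesis unfolding integral_over_def PS_def using root by blast
qed

definition lspan :: "'k::field set \<Rightarrow> 'k set \<Rightarrow> 'k set" where
  "lspan S G = {(\<Sum>g\<in>G. c g * g) | c. \<forall>g\<in>G. c g \<in> S}"

lemma lspan_intro: "\<forall>g\<in>G. c g \<in> S \<Longrightarrow> (\<Sum>g\<in>G. c g * g) \<in> lspan S G"
  unfolding lspan_def by blast

lemma lspan_add: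
  assumes S: "subring S" and "x \<in> lspan S G" "y \<in> lspan S G"
  shows "x + y \<in> lspan S G"
proof -
  from assms obtain c d where c: "\<forall>g\<in>G. c g \<in> S" "x = (\<Sum>g\<in>G. c g * g)"
    and d: "\<forall>g\<in>G. d g \<in> S" "y = (\<Sum>g\<in>G. d g * g)" unfolding lspan_def by auto
  have "x + y = (\<Sum>g\<in>G. (c g + d g) * g)" using c d by (simp add: sum.distrib distrib_right)
  moreover have "\<forall>g\<in>G. c g + d g \<in> S" using c d S by (auto intro: subringD)
  ultimately show ?thesis by (simp add: lspan_intro)
qed

lemma lspan_smult:
  assumes S: "subring S" and "x \<in> lspan S G" "a \<in> S"
  shows "a * x \<in> lspan S G"
proof -
  from assms obtain c where c: "\<forall>g\<in>G. c g \<in> S" "x = (\<Sum>g\<in>G. c g * g)"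
    unfolding lspan_def by auto
  have "a * x = (\<Sum>g\<in>G. (a * c g) * g)" using c by (simp add: sum_distrib_left mult.assoc)
  moreover have "\<forall>g\<in>G. a * c g \<in> S" using c assms by (auto intro: subringD)
  ultimately show ?thesis by (simp add: lspan_intro)
qed

lemma lspan_0: "subring S \<Longrightarrow> 0 \<in> lspan S G"
  unfolding lspan_def by (rule CollectI, rule exI[of _ "\<lambda>_. 0"]) (auto intro: subringD)

lemma lspan_gen:
  assumes S: "subring S" and G: "finite G" and h: "h \<in> G"
  shows "h \<in> lspan S G"
proof -
  have eq: "(\<Sum>g\<in>G. (if g = h then 1 else 0) * g) = h"
  proof -
    have "(\<Sum>g\<in>G. (if g = h then 1 else 0) * g) = (\<Sum>g\<in>G. if g = h then h else 0)"
      by (rule sum.cong) auto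
    then show ?thesis using G h by simp
  qed
  have "\<forall>g\<in>G. (if g = h then 1 else 0) \<in> S" using S by (auto intro: subringD)
  then have m: "(\<Sum>g\<in>G. (if g = h then 1 else 0) * g) \<in> lspan S G" by (rule lspan_intro)
  show ?thesis using m unfolding eq .
qed

lemma lspan_sum: "subring S \<Longrightarrow> (\<And>a. a \<in> A \<Longrightarrow> f a \<in> lspan S G) \<Longrightarrow> sum f A \<in> lspan S G"
  by (induction A rule: infinite_finite_induct) (auto intro: lspan_add lspan_0)

lemma lspan_stable:
  assumes S: "subring S" and st: "\<forall>g\<in>G. s * g \<in> lspan S G" and x: "x \<in> lspan S G"
  shows "s * x \<in> lspan S G"
proof -
  from x obtain c where c: "\<forall>g\<in>G. c g \<in> S" "x = (\<Sum>g\<in>G. c g * g)"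
    unfolding lspan_def by auto
  have "s * x = (\<Sum>g\<in>G. c g * (s * g))" using c by (simp add: sum_distrib_left algebra_simps)
  also have "\<dots> \<in> lspan S G"
  proof (rule lspan_sum[OF S])
    fix g assume "g \<in> G"
    then show "c g * (s * g) \<in> lspan S G" using lspan_smult[OF S, of "s * g" G "c g"] c st by blast
  qed
  finally show ?thesis .
qed

lemma det_trick_set:
  assumes S: "subring S" and G: "finite G" and one: "1 \<in> G"
    and st: "\<forall>g\<in>G. s * g \<in> lspan S G"
  shows "integral_over S s"
proof -
  obtain h where h: "bij_betw h {0..<card G} G" using ex_bij_betw_nat_finite[OF G] by blast
  then obtain k where k: "k \<in> {0..<card G}" "h k = 1" using one by (metis bij_betw_iff_bijections)
  show ?thesis
  proof (rule det_trick[OF S, of k "card G" h s])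
    show "k < card G" using k by simp
    show "h k \<noteq> 0" using k by simp
    show "\<forall>i<card G. \<exists>a. (\<forall>j<card G. a j \<in> S) \<and> s * h i = (\<Sum>j = 0..<card G. a j * h j)"
    proof (intro allI impI)
      fix i assume i: "i < card G"
      then have "h i \<in> G" using h by (auto simp: bij_betw_def)
      then obtain c where c: "\<forall>g\<in>G. c g \<in> S" "s * h i = (\<Sum>g\<in>G. c g * g)"
        using st unfolding lspan_def by auto
      have "(\<Sum>g\<in>G. c g * g) = (\<Sum>j = 0..<card G. c (h j) * h j)"
        using sum.reindex_bij_betw[OF h, of "\<lambda>g. c g * g"] by simp
      moreover have "\<forall>j<card G. c (h j) \<in> S" using c h by (auto simp: bij_betw_def)
      ultimately show "\<exists>a. (\<forall>j<card G. a j \<in> S) \<and> s * h i = (\<Sum>j = 0..<card G. a j * h j)"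
        using c by metis
    qed
  qed
qed

lemma integral_root:
  assumes S: "subring S" and n: "n \<ge> 1" and y: "y ^ n \<in> S"
  shows "integral_over S y"
proof -
  define p where "p = monom 1 n - [:y ^ n:]"
  have deg: "degree p = n" unfolding p_def using n
    by (subst diff_conv_add_uminus, subst degree_add_eq_left) (auto simp: degree_monom_eq)
  have "lead_coeff p = 1" unfolding deg unfolding p_def using n by (simp add: coeff_pCons split: nat.splits)
  moreover have "\<forall>i. coeff p i \<in> S"
    unfolding p_def using S y by (auto simp: coeff_monom coeff_pCons split: nat.splits intro: subringD subring_uminus)
  moreover have "poly p y = 0" unfolding p_def by (simp add: poly_monom)
  ultimately show ?thesis unfolding integral_over_def by blast
qed

lemma integral_powers:
  assumes S: "subring S" and x: "integral_over S x"
  obtains m where "m \<ge> 1" "\<And>k. x ^ k \<in> lspan S ((\<lambda>i. x ^ i) ` {..<m})"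
proof -
  from x obtain p where p: "lead_coeff p = 1" "\<forall>i. coeff p i \<in> S" "poly p x = 0"
    unfolding integral_over_def by blast
  define m where "m = degree p"
  define G where "G = (\<lambda>i. x ^ i) ` {..<m}"
  have m: "m \<ge> 1"
  proof (rule ccontr)
    assume "\<not> m \<ge> 1"
    then have "degree p = 0" unfolding m_def by simp
    then have "p = [:1:]" using p(1) by (metis leading_coeff_0_iff one_neq_zero degree_0_id)
    then show False using p(3) by simp
  qed
  have G: "finite G" unfolding G_def by simp
  have xm: "x ^ m = (\<Sum>i<m. (- coeff p i) * x ^ i)"
  proof -
    have "0 = (\<Sum>i\<le>m. coeff p i * x ^ i)" using p(3) unfolding m_def poly_altdef by simp
    also have "\<dots> = (\<Sum>i<m. coeff p i * x ^ i) + x ^ m"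
      using p(1) unfolding m_def by (simp add: lessThan_Suc_atMost[symmetric])
    finally show ?thesis by (simp add: sum_negf eq_neg_iff_add_eq_0 add.commute)
  qed
  have gen: "x ^ i \<in> lspan S G" if "i < m" for i
    by (rule lspan_gen[OF S G]) (use that in \<open>auto simp: G_def\<close>)
  have st: "\<forall>g\<in>G. x * g \<in> lspan S G"
  proof
    fix g assume "g \<in> G"
    then obtain i where i: "i < m" "g = x ^ i" unfolding G_def by auto
    show "x * g \<in> lspan S G"
    proof (cases "Suc i < m")
      case True
      then show ?thesis using gen[of "Suc i"] i by simp
    next
      case False
      then have "Suc i = m" using i by simp
      then have "x * g = x ^ m" using i by (metis power_Suc)
      also have "\<dots> \<in> lspan S G" unfolding xm
        by (rule lspan_sum[OF S], rule lspan_smult[OF S]) (use gen p(2) S subring_uminus in auto)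
      finally show ?thesis .
    qed
  qed
  have "x ^ k \<in> lspan S G" for k
  proof (induction k)
    case 0
    then show ?case using gen[of 0] m by simp
  next
    case (Suc k)
    then show ?case using lspan_stable[OF S st Suc] by simp
  qed
  then show ?thesis using that m unfolding G_def by blast
qed

lemma integral_add_mult:
  assumes S: "subring S" and x: "integral_over S x" and y: "integral_over S y"
  shows "integral_over S (x + y)" "integral_over S (x * y)"
proof -
  obtain mx where mx: "mx \<ge> 1" "\<And>k. x ^ k \<in> lspan S ((\<lambda>i. x ^ i) ` {..<mx})"
    using integral_powers[OF S x] by blast
  obtain my where my: "my \<ge> 1" "\<And>k. y ^ k \<in> lspan S ((\<lambda>i. y ^ i) ` {..<my})"
    using integral_powers[OF S y] by blast
  define Gx where "Gx = (\<lambda>i. x ^ i) ` {..<mx}"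
  define Gy where "Gy = (\<lambda>i. y ^ i) ` {..<my}"
  define G where "G = (\<lambda>(i,j). x ^ i * y ^ j) ` ({..<mx} \<times> {..<my})"
  have G: "finite G" unfolding G_def by simp
  have one: "1 \<in> G" unfolding G_def using mx my by (auto intro!: image_eqI[of _ _ "(0,0)"])
  have all: "x ^ a * y ^ b \<in> lspan S G" for a b
  proof -
    obtain c where c: "\<forall>g\<in>Gx. c g \<in> S" "x ^ a = (\<Sum>g\<in>Gx. c g * g)"
      using mx(2)[of a] unfolding lspan_def Gx_def by auto
    obtain d where d: "\<forall>h\<in>Gy. d h \<in> S" "y ^ b = (\<Sum>h\<in>Gy. d h * h)"
      using my(2)[of b] unfolding lspan_def Gy_def by auto
    have "x ^ a * y ^ b = (\<Sum>g\<in>Gx. \<Sum>h\<in>Gy. (c g * d h) * (g * h))"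
      unfolding c(2) d(2) sum_product by (simp add: algebra_simps)
    also have "\<dots> \<in> lspan S G"
    proof (rule lspan_sum[OF S], rule lspan_sum[OF S])
      fix g h assume g: "g \<in> Gx" and h: "h \<in> Gy"
      have "g * h \<in> G" using g h unfolding Gx_def Gy_def G_def by auto
      then have "g * h \<in> lspan S G" by (rule lspan_gen[OF S G])
      moreover have "c g * d h \<in> S" using c d g h S by (auto intro: subringD)
      ultimately show "(c g * d h) * (g * h) \<in> lspan S G" by (rule lspan_smult[OF S])
    qed
    finally show ?thesis .
  qed
  show "integral_over S (x + y)"
  proof (rule det_trick_set[OF S G one], intro ballI)
    fix g assume "g \<in> G"
    then obtain i j where g: "g = x ^ i * y ^ j" unfolding G_def by auto
    have "(x + y) * g = x ^ Suc i * y ^ j + x ^ i * y ^ Suc j" unfolding g by (simp add: algebra_simps)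
    moreover have "x ^ Suc i * y ^ j + x ^ i * y ^ Suc j \<in> lspan S G"
      by (rule lspan_add[OF S all all])
    ultimately show "(x + y) * g \<in> lspan S G" by (simp only:)
  qed
  show "integral_over S (x * y)"
  proof (rule det_trick_set[OF S G one], intro ballI)
    fix g assume "g \<in> G"
    then obtain i j where g: "g = x ^ i * y ^ j" unfolding G_def by auto
    have "(x * y) * g = x ^ Suc i * y ^ Suc j" unfolding g by (simp add: algebra_simps)
    then show "(x * y) * g \<in> lspan S G" using all[of "Suc i" "Suc j"] by (simp only:)
  qed
qed

lemma integral_uminus:
  assumes S: "subring S" and x: "integral_over S x"
  shows "integral_over S (- x)"
proof -
  obtain m where m: "m \<ge> 1" "\<And>k. x ^ k \<in> lspan S ((\<lambda>i. x ^ i) ` {..<m})"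
    using integral_powers[OF S x] by blast
  define G where "G = (\<lambda>i. x ^ i) ` {..<m}"
  have G: "finite G" unfolding G_def by simp
  have one: "1 \<in> G" unfolding G_def using m by (auto intro!: image_eqI[of _ _ 0])
  show ?thesis
  proof (rule det_trick_set[OF S G one], intro ballI)
    fix g assume "g \<in> G"
    then obtain i where g: "g = x ^ i" unfolding G_def by auto
    have "(- x) * g = (- 1) * x ^ Suc i" unfolding g by simp
    moreover have "(- 1) * x ^ Suc i \<in> lspan S G"
      by (rule lspan_smult[OF S]) (use m(2)[of "Suc i"] S subring_uminus[OF S subringD(2)[OF S]] in \<open>simp_all only: G_def\<close>)
    ultimately show "(- x) * g \<in> lspan S G" by (simp only:)
  qed
qed

lemma integral_closure_subring:
  assumes S: "subring S"
  shows "subring {x. integral_over S x}"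
  unfolding subring_def
proof (intro conjI ballI; (simp only: mem_Collect_eq)?)
  have "integral_over S y" if "y \<in> S" for y
    using integral_root[OF S, of 1 y] that by simp
  then show "integral_over S 0" "integral_over S 1" using S by (auto intro: subringD)
  fix x y assume x: "integral_over S x" and y: "integral_over S y"
  show "integral_over S (x + y)" "integral_over S (x * y)" using integral_add_mult[OF S x y] by auto
  show "integral_over S (x - y)" using integral_add_mult(1)[OF S x integral_uminus[OF S y]] by simp
qed

lemma integral_mono: "S \<subseteq> T \<Longrightarrow> integral_over S x \<Longrightarrow> integral_over T x"
  unfolding integral_over_def by blast

lemma integral_inverse_in:
  fixes e :: "'k::field"
  assumes S: "subring S" and e: "e \<in> S" "e \<noteq> 0" and u: "integral_over S (inverse e)"
  shows "inverse e \<in> S"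
proof -
  from u obtain p where p: "lead_coeff p = 1" "\<forall>i. coeff p i \<in> S" "poly p (inverse e) = 0"
    unfolding integral_over_def by blast
  have "degree p \<noteq> 0"
  proof
    assume "degree p = 0"
    then have "p = [:1:]" using p(1) by (metis leading_coeff_0_iff one_neq_zero degree_0_id)
    then show False using p(3) by simp
  qed
  then obtain k where k: "degree p = Suc k" using not0_implies_Suc by blast
  have pw: "e ^ k * inverse e ^ i = e ^ (k - i)" if "i \<le> k" for i
  proof -
    have "e ^ k = e ^ (k - i) * e ^ i" using that by (simp add: power_add[symmetric])
    then show ?thesis using e by (simp add: power_inverse field_simps)
  qed
  have pw2: "e ^ k * inverse e ^ Suc k = inverse e" using e by (simp add: power_inverse field_simps)
  have "0 = (\<Sum>i\<le>Suc k. coeff p i * inverse e ^ i)" using p(3) unfolding k[symmetric] poly_altdef by simp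
  also have "\<dots> = (\<Sum>i\<le>k. coeff p i * inverse e ^ i) + inverse e ^ Suc k"
    using p(1) k by simp
  finally have "0 = e ^ k * ((\<Sum>i\<le>k. coeff p i * inverse e ^ i) + inverse e ^ Suc k)" by simp
  also have "\<dots> = (\<Sum>i\<le>k. coeff p i * (e ^ k * inverse e ^ i)) + e ^ k * inverse e ^ Suc k"
    by (simp add: sum_distrib_left algebra_simps)
  also have "\<dots> = (\<Sum>i\<le>k. coeff p i * e ^ (k - i)) + inverse e"
    using pw pw2 by simp
  finally have "inverse e = - (\<Sum>i\<le>k. coeff p i * e ^ (k - i))" by (simp add: eq_neg_iff_add_eq_0 add.commute)
  also have "\<dots> \<in> S" using S p(2) e
    by (intro subring_uminus subring_sum subringD(5) subring_pow) auto
  finally show ?thesis .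
qed

lemma qf_sub:
  assumes "subring S" shows "S \<subseteq> quot_field S"
proof
  fix x assume "x \<in> S"
  moreover have "x = x / 1" by simp
  ultimately show "x \<in> quot_field S" using subringD(2)[OF assms] unfolding quot_field_def
    by (metis (mono_tags, lifting) mem_Collect_eq one_neq_zero)
qed

lemma qf_mono: "S \<subseteq> T \<Longrightarrow> quot_field S \<subseteq> quot_field T"
  unfolding quot_field_def by blast

lemma qf_subring:
  assumes S: "subring S"
  shows "subring (quot_field S)"
  unfolding subring_def
proof (intro conjI ballI)
  show "0 \<in> quot_field S" "1 \<in> quot_field S" using qf_sub[OF S] S by (auto intro: subringD)
  fix x y assume "x \<in> quot_field S" "y \<in> quot_field S"
  then obtain a b c d where ab: "x = a / b" "a \<in> S" "b \<in> S" "b \<noteq> 0"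
    and cd: "y = c / d" "c \<in> S" "d \<in> S" "d \<noteq> 0" unfolding quot_field_def by blast
  have bd: "b * d \<in> S" "b * d \<noteq> 0" using ab cd S by (auto intro: subringD)
  have "x + y = (a * d + c * b) / (b * d)" using ab cd by (simp add: field_simps)
  moreover have "a * d + c * b \<in> S" using ab cd S by (auto intro: subringD)
  ultimately show "x + y \<in> quot_field S" using bd unfolding quot_field_def by blast
  have "x - y = (a * d - c * b) / (b * d)" using ab cd by (simp add: field_simps)
  moreover have "a * d - c * b \<in> S" using ab cd S by (auto intro: subringD)
  ultimately show "x - y \<in> quot_field S" using bd unfolding quot_field_def by blast
  have "x * y = (a * c) / (b * d)" using ab cd by (simp add: field_simps)
  moreover have "a * c \<in> S" using ab cd S by (auto intro: subringD)
  ultimately show "x * y \<in> quot_field S" using bd unfolding quot_field_def by blast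
qed

lemma qf_inverse:
  assumes S: "subring S" and x: "x \<in> quot_field S"
  shows "inverse x \<in> quot_field S"
proof (cases "x = 0")
  case True
  then show ?thesis using qf_sub[OF S] S by (auto intro: subringD)
next
  case False
  from x obtain a b where ab: "x = a / b" "a \<in> S" "b \<in> S" "b \<noteq> 0" unfolding quot_field_def by blast
  then have "a \<noteq> 0" using False by simp
  moreover have "inverse x = b / a" using ab by simp
  ultimately show ?thesis using ab unfolding quot_field_def by blast
qed

lemma qf_in_field:
  assumes L: "subfield L" and SL: "S \<subseteq> L"
  shows "quot_field S \<subseteq> L"
proof
  fix x assume "x \<in> quot_field S"
  then obtain a b where ab: "x = a / b" "a \<in> S" "b \<in> S" "b \<noteq> 0" unfolding quot_field_def by blast
  then have "inverse b \<in> L" using L SL unfolding subfield_def by auto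
  then have "a * inverse b \<in> L" using L SL ab unfolding subfield_def by (auto intro: subringD)
  then show "x \<in> L" using ab by (simp add: divide_inverse)
qed

lemma AV_dichotomy:
  assumes AV: "AV_domain D" and Q: "quot_field D = UNIV" and x: "x \<noteq> 0"
  shows "\<exists>n\<ge>1. x ^ n \<in> D \<or> inverse x ^ n \<in> D"
proof -
  have "x \<in> quot_field D" using Q by simp
  then obtain a b where ab: "x = a / b" "a \<in> D" "b \<in> D" "b \<noteq> 0" unfolding quot_field_def by blast
  then have a: "a \<noteq> 0" using x by simp
  then obtain n where n: "n \<ge> 1" "dvd_in D (a ^ n) (b ^ n) \<or> dvd_in D (b ^ n) (a ^ n)"
    using AV ab unfolding AV_domain_def by blast
  from n(2) show ?thesis
  proof
    assume "dvd_in D (a ^ n) (b ^ n)"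
    then obtain c where "c \<in> D" "b ^ n = a ^ n * c" unfolding dvd_in_def by blast
    moreover have "inverse x ^ n = b ^ n / a ^ n" using ab by (simp add: power_divide)
    ultimately show ?thesis using n(1) a by auto
  next
    assume "dvd_in D (b ^ n) (a ^ n)"
    then obtain c where "c \<in> D" "a ^ n = b ^ n * c" unfolding dvd_in_def by blast
    moreover have "x ^ n = a ^ n / b ^ n" using ab by (simp add: power_divide)
    ultimately show ?thesis using n(1) ab by auto
  qed
qed

lemma AV_integral_root:
  assumes AV: "AV_domain D" and Q: "quot_field D = UNIV" and x: "integral_over D x"
  shows "\<exists>n\<ge>1. x ^ n \<in> D"
proof (cases "x = 0")
  case True
  have "subring D" using AV unfolding AV_domain_def by blast
  then show ?thesis using True by (intro exI[of _ 1]) (auto intro: subringD)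
next
  case False
  have S: "subring D" using AV unfolding AV_domain_def by blast
  obtain n where n: "n \<ge> 1" "x ^ n \<in> D \<or> inverse x ^ n \<in> D"
    using AV_dichotomy[OF AV Q False] by blast
  show ?thesis
  proof (cases "x ^ n \<in> D")
    case True
    then show ?thesis using n by blast
  next
    case nd: False
    then have c: "inverse x ^ n \<in> D" using n by blast
    have "x ^ n \<in> {x. integral_over D x}"
      by (rule subring_pow[OF integral_closure_subring[OF S]]) (use x in simp)
    then have "integral_over D (inverse (inverse x ^ n))" by (simp add: power_inverse)
    then have "inverse (inverse x ^ n) \<in> D"
      using integral_inverse_in[OF S c] False by simp
    then show ?thesis using n nd by (simp add: power_inverse)
  qed
qed

theorem theorem2:
  fixes D L :: "'k::field set"
  assumes "AV_domain D"
    and "quot_field D = UNIV"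
    and "subfield L"
  shows "AV_domain (D \<inter> L) \<and>
    valuation_domain_with_qf (integral_closure D UNIV \<inter> quot_field (D \<inter> L)) (quot_field (D \<inter> L)) \<and>
    integral_closure (D \<inter> L) (quot_field (D \<inter> L)) = integral_closure D UNIV \<inter> quot_field (D \<inter> L) \<and>
    integral_closure (D \<inter> quot_field (D \<inter> L)) (quot_field (D \<inter> L)) = integral_closure D UNIV \<inter> quot_field (D \<inter> L)"
proof -
  note AV = assms(1) and Q = assms(2) and L = assms(3)
  have sD: "subring D" using AV unfolding AV_domain_def by blast
  have sL: "subring L" using L unfolding subfield_def by blast
  have sDL: "subring (D \<inter> L)" by (rule subring_Int[OF sD sL])
  define M where "M = quot_field (D \<inter> L)"
  have sM: "subring M" unfolding M_def by (rule qf_subring[OF sDL])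
  have DLM: "D \<inter> L \<subseteq> M" unfolding M_def by (rule qf_sub[OF sDL])
  have MsubL: "M \<subseteq> L" unfolding M_def by (rule qf_in_field[OF L]) auto
  have Dbar: "integral_closure D UNIV = {x. integral_over D x}" unfolding integral_closure_def by simp
  define V where "V = {x. integral_over D x} \<inter> M"
  have sV: "subring V" unfolding V_def by (rule subring_Int[OF integral_closure_subring[OF sD] sM])
  have DLV: "D \<inter> L \<subseteq> V" unfolding V_def using DLM
    by (auto intro!: integral_root[OF sD, of 1])
  have VM: "V \<subseteq> M" unfolding V_def by blast
  have P1: "AV_domain (D \<inter> L)"
    unfolding AV_domain_def
  proof (intro conjI sDL ballI impI)
    fix a b assume a: "a \<in> D \<inter> L" and b: "b \<in> D \<inter> L" and a0: "a \<noteq> 0" and b0: "b \<noteq> 0"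
    then obtain n where n: "n \<ge> 1" "dvd_in D (a ^ n) (b ^ n) \<or> dvd_in D (b ^ n) (a ^ n)"
      using AV unfolding AV_domain_def by blast
    have key: "dvd_in (D \<inter> L) (u ^ n) (w ^ n)"
      if hh: "dvd_in D (u ^ n) (w ^ n)" "u \<in> D \<inter> L" "w \<in> D \<inter> L" "u \<noteq> 0" for u w
    proof -
      obtain c where c: "c \<in> D" "w ^ n = u ^ n * c" using hh(1) unfolding dvd_in_def by blast
      have "c = w ^ n * inverse (u ^ n)" using c hh(4) by (simp add: field_simps)
      moreover have "inverse (u ^ n) \<in> L"
        using L subring_pow[OF sL, of u n] hh(2,4) unfolding subfield_def by auto
      moreover have "w ^ n \<in> L" using subring_pow[OF sL, of w n] hh(3) by auto
      ultimately have "c \<in> L" using sL by (auto intro: subringD)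
      then show ?thesis using c unfolding dvd_in_def by blast
    qed
    show "\<exists>n\<ge>1. dvd_in (D \<inter> L) (a ^ n) (b ^ n) \<or> dvd_in (D \<inter> L) (b ^ n) (a ^ n)"
      using n key a b a0 b0 by blast
  qed
  have QV: "quot_field V = M"
  proof
    show "quot_field V \<subseteq> M"
    proof
      fix x assume "x \<in> quot_field V"
      then obtain a b where ab: "x = a / b" "a \<in> V" "b \<in> V" "b \<noteq> 0" unfolding quot_field_def by blast
      then have "inverse b \<in> M" using VM qf_inverse[OF sDL] unfolding M_def by blast
      then have "a * inverse b \<in> M" using ab VM sM by (auto intro: subringD)
      then show "x \<in> M" using ab by (simp add: divide_inverse)
    qed
    show "M \<subseteq> quot_field V" unfolding M_def by (rule qf_mono[OF DLV])
  qed
  have P2: "valuation_domain_with_qf V M"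
    unfolding valuation_domain_with_qf_def
  proof (intro conjI sV QV ballI impI)
    fix x assume x: "x \<in> M" "x \<noteq> 0"
    then obtain n where n: "n \<ge> 1" "x ^ n \<in> D \<or> inverse x ^ n \<in> D"
      using AV_dichotomy[OF AV Q] by blast
    have ix: "inverse x \<in> M" using qf_inverse[OF sDL] x unfolding M_def by blast
    from n(2) show "x \<in> V \<or> inverse x \<in> V"
      using integral_root[OF sD n(1)] x ix unfolding V_def by blast
  qed
  have P3: "integral_closure T M = V" if T1: "D \<inter> L \<subseteq> T" and T2: "T \<subseteq> D" and sT: "subring T"
    and pw: "\<And>x n. x \<in> M \<Longrightarrow> x ^ n \<in> D \<Longrightarrow> x ^ n \<in> T" for T
  proof
    show "integral_closure T M \<subseteq> V"
      unfolding integral_closure_def V_def using integral_mono[OF T2] by blast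
    show "V \<subseteq> integral_closure T M"
    proof
      fix x assume x: "x \<in> V"
      then have xM: "x \<in> M" and xi: "integral_over D x" unfolding V_def by auto
      obtain n where n: "n \<ge> 1" "x ^ n \<in> D" using AV_integral_root[OF AV Q xi] by blast
      have "integral_over T x" by (rule integral_root[OF sT n(1) pw[OF xM n(2)]])
      then show "x \<in> integral_closure T M" unfolding integral_closure_def using xM by blast
    qed
  qed
  have P3a: "integral_closure (D \<inter> L) M = V"
  proof (rule P3[OF _ _ sDL])
    fix x n assume "x \<in> M" "x ^ n \<in> D"
    then show "x ^ n \<in> D \<inter> L" using subring_pow[OF sL] MsubL by blast
  qed auto
  have P3b: "integral_closure (D \<inter> M) M = V"
  proof (rule P3[OF _ _ subring_Int[OF sD sM]])
    fix x n assume "x \<in> M" "x ^ n \<in> D"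
    then show "x ^ n \<in> D \<inter> M" using subring_pow[OF sM] by blast
  qed (use DLM in auto)
  show ?thesis using P1 P2 P3a P3b unfolding M_def[symmetric] Dbar V_def by blast
qed

end
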